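(* Let $\mathscr P$ be a polymatroid and let $\mathrm{Stal}_{\mathscr P}$ be computed with respect to any lexicographic order on $\mathbb N^p$. Then $\mathrm{Stal}_{\mathscr P}(\mathbf t)=\text{M\"ob}_{\mathscr P}(\mathbf t)$.
   Context: Notation: $[p]=\{1,\dots,p\}$; $\mathbf e_i$ is the $i$th standard basis vector; $\mathbf e_J=\sum_{j\in J}\mathbf e_j$; $|\mathbf n|=n_1+\dots+n_p$; $\le$ is componentwise, $<$ its strict version; $\mathbf t^{\mathbf n}=t_1^{n_1}\cdots t_p^{n_p}$. Polymatroid: a finite set $\mathscr P\subseteq\mathbb N^p$ that is homogeneous (all $\mathbf u\in\mathscr P$ have the same $|\mathbf u|$, the rank $\mathrm{rk}(\mathscr P)$) and M-convex: for all $\mathbf u,\mathbf v\in\mathscr P$ and $i$ with $u_i>v_i$ there is $j$ with $u_j<v_j$ and $\mathbf u-\mathbf e_i+\mathbf e_j\in\mathscr P$. $I(\mathscr P)=\{\mathbf n\in\mathbb N^p:\mathbf n\le\mathbf u\text{ for some }\mathbf u\in\mathscr P\}$. Lexicographic orders: given a total ordering $\sigma_1,\dots,\sigma_p$ of $[p]$, $\mathbf u\prec\mathbf v$ iff $\mathbf u\neq\mathbf v$ and at the first index (in the order $\sigma_1,\sigma_2,\dots$) where they differ, $\mathbf u$ has the smaller entry. Stalactites: for $\mathbf u\in\mathscr P$, $V\subseteq\mathscr P$, $L(\mathbf u;V)=\{\ell\in[p]:\mathbf u-\mathbf e_\ell+\mathbf e_j\in V\text{ for some }j\}$, $\mathrm{St}(\mathbf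 u;V)=\{\mathbf u-\mathbf e_J:J\subseteq L(\mathbf u;V)\}$. With $\mathscr P=\{\mathbf a_1\prec\dots\prec\mathbf a_r\}$, $c_{\mathbf n}(\mathscr P)$ is the number of $k$ with $\mathbf n\in\mathrm{St}(\mathbf a_k;\{\mathbf a_1,\dots,\mathbf a_{k-1}\})$; $\mathrm{Stal}_{\mathscr P}(\mathbf t)=\sum_{\mathbf n\in I(\mathscr P)}(-1)^{\mathrm{rk}(\mathscr P)-|\mathbf n|}c_{\mathbf n}(\mathscr P)\mathbf t^{\mathbf n}$. M\"obius polynomial: $P$ is the poset on $I(\mathscr P)\sqcup\{\hat1\}$ (componentwise order on $I(\mathscr P)$, $\hat1$ a new maximum), $\mu_P(\mathbf m,\mathbf m)=1$, $\mu_P(\mathbf m,\mathbf n)=-\sum_{\mathbf m\le\mathbf a<\mathbf n}\mu_P(\mathbf m,\mathbf a)$ for $\mathbf m<\mathbf n$; $\mu_{\mathscr P}(\mathbf n)=-\mu_P(\mathbf n,\hat1)$; $\text{M\"ob}_{\mathscr P}(\mathbf t)=\sum_{\mathbf n\in I(\mathscr P)}\mu_{\mathscr P}(\mathbf n)\mathbf t^{\mathbf n}$. *)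

theory Defs
  imports Main
begin

(* Vectors in N^p are functions nat => nat, indexed by [p] = {1..p}, zero outside [p]. *)
definition vecs :: "nat \<Rightarrow> (nat \<Rightarrow> nat) set" where
  "vecs p = {v. \<forall>i. i \<notin> {1..p} \<longrightarrow> v i = 0}"

definition size1 :: "nat \<Rightarrow> (nat \<Rightarrow> nat) \<Rightarrow> nat" where
  "size1 p n = (\<Sum>i\<in>{1..p}. n i)"

definition exch :: "(nat \<Rightarrow> nat) \<Rightarrow> nat \<Rightarrow> nat \<Rightarrow> (nat \<Rightarrow> nat)" where
  "exch u i j = (\<lambda>k. u k - (if k = i then 1 else 0) + (if k = j then 1 else 0))"

definition polymatroid :: "nat \<Rightarrow> (nat \<Rightarrow> nat) set \<Rightarrow> bool" where
  "polymatroid p P \<longleftrightarrow>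
     finite P \<and> P \<subseteq> vecs p \<and>
     (\<forall>u\<in>P. \<forall>v\<in>P. size1 p u = size1 p v) \<and>
     (\<forall>u\<in>P. \<forall>v\<in>P. \<forall>i\<in>{1..p}. v i < u i \<longrightarrow>
        (\<exists>j\<in>{1..p}. u j < v j \<and> exch u i j \<in> P))"

definition rk :: "nat \<Rightarrow> (nat \<Rightarrow> nat) set \<Rightarrow> nat" where
  "rk p P = size1 p (SOME u. u \<in> P)"

definition Ideal :: "nat \<Rightarrow> (nat \<Rightarrow> nat) set \<Rightarrow> (nat \<Rightarrow> nat) set" where
  "Ideal p P = {n \<in> vecs p. \<exists>u\<in>P. n \<le> u}"

(* lexicographic order w.r.t. the ordering sigma 1, ..., sigma p of [p] *)
definition lex_less :: "nat \<Rightarrow> (nat \<Rightarrow> nat) \<Rightarrow> (nat \<Rightarrow> nat) \<Rightarrow> (nat \<Rightarrow> nat) \<Rightarrow> bool" where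
  "lex_less p \<sigma> u v \<longleftrightarrow> u \<noteq> v \<and>
     (\<exists>k\<in>{1..p}. (\<forall>i\<in>{1..<k}. u (\<sigma> i) = v (\<sigma> i)) \<and> u (\<sigma> k) < v (\<sigma> k))"

(* L(u;V), with u - e_l + e_j computed in Z^p *)
definition Lset :: "nat \<Rightarrow> (nat \<Rightarrow> nat) \<Rightarrow> (nat \<Rightarrow> nat) set \<Rightarrow> nat set" where
  "Lset p u V = {l \<in> {1..p}. \<exists>j\<in>{1..p}. \<exists>v\<in>V.
      \<forall>k. int (v k) = int (u k) - (if k = l then 1 else 0) + (if k = j then 1 else 0)}"

definition St :: "nat \<Rightarrow> (nat \<Rightarrow> nat) \<Rightarrow> (nat \<Rightarrow> nat) set \<Rightarrow> (nat \<Rightarrow> nat) set" where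
  "St p u V = {(\<lambda>k. u k - (if k \<in> J then 1 else 0)) | J. J \<subseteq> Lset p u V}"

(* c_n(P): number of a_k with n \<in> St(a_k; {a_1,...,a_{k-1}}) *)
definition stal_c :: "nat \<Rightarrow> (nat \<Rightarrow> nat) \<Rightarrow> (nat \<Rightarrow> nat) set \<Rightarrow> (nat \<Rightarrow> nat) \<Rightarrow> nat" where
  "stal_c p \<sigma> P n = card {a \<in> P. n \<in> St p a {b \<in> P. lex_less p \<sigma> b a}}"

(* Multivariate polynomials in t_1..t_p are represented by their coefficient maps
   (exponent vector n \<mapsto> coefficient of t^n). *)
definition Stal :: "nat \<Rightarrow> (nat \<Rightarrow> nat) \<Rightarrow> (nat \<Rightarrow> nat) set \<Rightarrow> (nat \<Rightarrow> nat) \<Rightarrow> int" where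
  "Stal p \<sigma> P n = (if n \<in> Ideal p P
      then (-1) ^ (rk p P - size1 p n) * int (stal_c p \<sigma> P n) else 0)"

definition mobius :: "'a set \<Rightarrow> ('a \<Rightarrow> 'a \<Rightarrow> bool) \<Rightarrow> 'a \<Rightarrow> 'a \<Rightarrow> int" where
  "mobius S le = (THE f.
     (\<forall>m n. (m \<notin> S \<or> n \<notin> S) \<longrightarrow> f m n = 0) \<and>
     (\<forall>m\<in>S. \<forall>n\<in>S. f m n =
        (if m = n then 1
         else if le m n then - (\<Sum>a\<in>{a \<in> S. le m a \<and> le a n \<and> a \<noteq> n}. f m a)
         else 0)))"

(* The poset P = I(P) \<sqcup> {top}: Some n for n \<in> I(P), None for the new maximum *)
definition Pset :: "nat \<Rightarrow> (nat \<Rightarrow> nat) set \<Rightarrow> (nat \<Rightarrow> nat) option set" where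
  "Pset p P = Some ` Ideal p P \<union> {None}"

fun Ple :: "(nat \<Rightarrow> nat) option \<Rightarrow> (nat \<Rightarrow> nat) option \<Rightarrow> bool" where
  "Ple _ None = True"
| "Ple None (Some _) = False"
| "Ple (Some a) (Some b) = (a \<le> b)"

definition mu_P :: "nat \<Rightarrow> (nat \<Rightarrow> nat) set \<Rightarrow> (nat \<Rightarrow> nat) \<Rightarrow> int" where
  "mu_P p P n = - mobius (Pset p P) Ple (Some n) None"

definition Mob :: "nat \<Rightarrow> (nat \<Rightarrow> nat) set \<Rightarrow> (nat \<Rightarrow> nat) \<Rightarrow> int" where
  "Mob p P n = (if n \<in> Ideal p P then mu_P p P n else 0)"

end

theory Submission
  imports Defs
begin

lemma toggle_sum:
  fixes F :: "nat set set"
  assumes fin: "finite F" and finJ: "\<And>J. J \<in> F \<Longrightarrow> finite J"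
    and ins: "\<And>J. J \<in> F \<Longrightarrow> insert i J \<in> F"
    and del: "\<And>J. J \<in> F \<Longrightarrow> J - {i} \<in> F"
  shows "(\<Sum>J\<in>F. (-1::int) ^ card J) = 0"
proof -
  define F1 where "F1 = {J\<in>F. i \<notin> J}"
  define F2 where "F2 = {J\<in>F. i \<in> J}"
  have F: "F = F1 \<union> F2" "F1 \<inter> F2 = {}" unfolding F1_def F2_def by auto
  have F2im: "F2 = insert i ` F1"
  proof
    show "F2 \<subseteq> insert i ` F1"
    proof
      fix J assume "J \<in> F2"
      then have "J = insert i (J - {i})" "J - {i} \<in> F1" using del unfolding F1_def F2_def by auto
      then show "J \<in> insert i ` F1" by blast
    qed
    show "insert i ` F1 \<subseteq> F2" using ins unfolding F1_def F2_def by auto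
  qed
  have inj: "inj_on (insert i) F1"
    unfolding F1_def inj_on_def by (metis (mono_tags, lifting) Diff_insert_absorb mem_Collect_eq)
  have "(\<Sum>J\<in>F2. (-1::int) ^ card J) = (\<Sum>J\<in>F1. (-1::int) ^ card (insert i J))"
    unfolding F2im by (rule sum.reindex[OF inj, unfolded comp_def])
  also have "\<dots> = (\<Sum>J\<in>F1. - ((-1::int) ^ card J))"
    by (rule sum.cong) (auto simp: F1_def finJ)
  also have "\<dots> = - (\<Sum>J\<in>F1. (-1::int) ^ card J)" by (simp add: sum_negf)
  finally have "(\<Sum>J\<in>F2. (-1::int) ^ card J) = - (\<Sum>J\<in>F1. (-1::int) ^ card J)" .
  moreover have "finite F1" "finite F2" using fin F by auto
  ultimately show ?thesis using F by (simp add: sum.union_disjoint)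
qed

definition mob_spec :: "'a set \<Rightarrow> ('a \<Rightarrow> 'a \<Rightarrow> bool) \<Rightarrow> ('a \<Rightarrow> 'a \<Rightarrow> int) \<Rightarrow> bool" where
  "mob_spec S le f \<longleftrightarrow>
     (\<forall>m n. (m \<notin> S \<or> n \<notin> S) \<longrightarrow> f m n = 0) \<and>
     (\<forall>m\<in>S. \<forall>n\<in>S. f m n =
        (if m = n then 1
         else if le m n then - (\<Sum>a\<in>{a \<in> S. le m a \<and> le a n \<and> a \<noteq> n}. f m a)
         else 0))"

lemma mobius_The: "mobius S le = The (mob_spec S le)"
  unfolding mobius_def mob_spec_def by simp

lemma mob_unique:
  assumes fin: "finite S"
    and antis: "\<And>x y. x \<in> S \<Longrightarrow> y \<in> S \<Longrightarrow> le x y \<Longrightarrow> le y x \<Longrightarrow> x = y"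
    and tr: "\<And>x y z. x \<in> S \<Longrightarrow> y \<in> S \<Longrightarrow> z \<in> S \<Longrightarrow> le x y \<Longrightarrow> le y z \<Longrightarrow> le x z"
    and rfl: "\<And>x. x \<in> S \<Longrightarrow> le x x"
    and f1: "mob_spec S le f1" and f2: "mob_spec S le f2"
  shows "f1 = f2"
proof (intro ext)
  fix m n
  show "f1 m n = f2 m n"
  proof (cases "m \<in> S \<and> n \<in> S")
    case False
    then show ?thesis using f1 f2 unfolding mob_spec_def by auto
  next
    case True
    then have mS: "m \<in> S" by simp
    have main: "\<forall>n\<in>S. card {a\<in>S. le a n} = k \<longrightarrow> f1 m n = f2 m n" for k
    proof (induction k rule: less_induct)
      case (less k)
      show ?case
      proof (intro ballI impI)
        fix n assume nS: "n \<in> S" and ck: "card {a\<in>S. le a n} = k"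
        have IH: "f1 m a = f2 m a" if "a \<in> {a \<in> S. le m a \<and> le a n \<and> a \<noteq> n}" for a
        proof -
          from that have aS: "a \<in> S" and an: "le a n" "a \<noteq> n" by auto
          have sub: "{x\<in>S. le x a} \<subset> {x\<in>S. le x n}"
          proof
            show "{x\<in>S. le x a} \<subseteq> {x\<in>S. le x n}" using tr aS nS an by blast
            show "{x\<in>S. le x a} \<noteq> {x\<in>S. le x n}"
            proof
              assume "{x\<in>S. le x a} = {x\<in>S. le x n}"
              then have "le n a" using nS rfl by blast
              then show False using antis aS nS an by blast
            qed
          qed
          have "card {x\<in>S. le x a} < k" using psubset_card_mono[OF _ sub] fin ck by simp
          then show ?thesis using less.IH aS by blast
        qed
        have s: "(\<Sum>a\<in>{a \<in> S. le m a \<and> le a n \<and> a \<noteq> n}. f1 m a)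
              = (\<Sum>a\<in>{a \<in> S. le m a \<and> le a n \<and> a \<noteq> n}. f2 m a)"
          by (rule sum.cong[OF refl IH])
        have e1: "f1 m n = (if m = n then 1
         else if le m n then - (\<Sum>a\<in>{a \<in> S. le m a \<and> le a n \<and> a \<noteq> n}. f1 m a)
         else 0)" using f1 mS nS unfolding mob_spec_def by blast
        have e2: "f2 m n = (if m = n then 1
         else if le m n then - (\<Sum>a\<in>{a \<in> S. le m a \<and> le a n \<and> a \<noteq> n}. f2 m a)
         else 0)" using f2 mS nS unfolding mob_spec_def by blast
        show "f1 m n = f2 m n" using e1 e2 s by simp
      qed
    qed
    then show ?thesis using True by blast
  qed
qed

lemma mobius_eq:
  assumes fin: "finite S"
    and antis: "\<And>x y. x \<in> S \<Longrightarrow> y \<in> S \<Longrightarrow> le x y \<Longrightarrow> le y x \<Longrightarrow> x = y"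
    and tr: "\<And>x y z. x \<in> S \<Longrightarrow> y \<in> S \<Longrightarrow> z \<in> S \<Longrightarrow> le x y \<Longrightarrow> le y z \<Longrightarrow> le x z"
    and rfl: "\<And>x. x \<in> S \<Longrightarrow> le x x"
    and g: "mob_spec S le g"
  shows "mobius S le = g"
  unfolding mobius_The
  proof (rule the_equality)
  show "mob_spec S le g" by (rule g)
  show "f = g" if "mob_spec S le f" for f
    by (rule mob_unique[OF fin antis tr rfl that g])
qed


definition addJ :: "(nat \<Rightarrow> nat) \<Rightarrow> nat set \<Rightarrow> (nat \<Rightarrow> nat)" where
  "addJ n J = (\<lambda>k. n k + (if k \<in> J then 1 else 0))"

definition hh :: "nat \<Rightarrow> (nat \<Rightarrow> nat) \<Rightarrow> (nat \<Rightarrow> nat) \<Rightarrow> int" where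
  "hh p n c = (if n \<le> c \<and> (\<forall>i. c i \<le> Suc (n i)) then (-1::int) ^ (size1 p c - size1 p n) else 0)"

lemma size1_addJ:
  assumes "J \<subseteq> {1..p}"
  shows "size1 p (addJ n J) = size1 p n + card J"
proof -
  have "(\<Sum>i\<in>{1..p}. (if i \<in> J then 1 else 0::nat)) = card ({1..p} \<inter> J)"
    by (simp add: sum.If_cases Int_def)
  also have "{1..p} \<inter> J = J" using assms by auto
  finally show ?thesis unfolding size1_def addJ_def by (simp add: sum.distrib)
qed

lemma addJ_vecs: "n \<in> vecs p \<Longrightarrow> J \<subseteq> {1..p} \<Longrightarrow> addJ n J \<in> vecs p"
  unfolding vecs_def addJ_def by auto

lemma le_addJ: "n \<le> addJ n J"
  unfolding addJ_def le_fun_def by auto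

lemma conv:
  assumes n: "n \<in> vecs p" and B: "B \<subseteq> vecs p" and finB: "finite B"
  shows "(\<Sum>c\<in>{c\<in>B. n \<le> c}. hh p n c) = (\<Sum>J\<in>{J. J \<subseteq> {1..p} \<and> addJ n J \<in> B}. (-1::int) ^ card J)"
proof -
  define F where "F = {J. J \<subseteq> {1..p} \<and> addJ n J \<in> B}"
  define C where "C = {c\<in>B. n \<le> c \<and> (\<forall>i. c i \<le> Suc (n i))}"
  have "(\<Sum>c\<in>{c\<in>B. n \<le> c}. hh p n c) = (\<Sum>c\<in>C. (-1::int) ^ (size1 p c - size1 p n))"
    by (rule sum.mono_neutral_cong_right) (auto simp: C_def hh_def finB)
  also have "C = addJ n ` F"
  proof
    show "addJ n ` F \<subseteq> C"
      unfolding C_def F_def using le_addJ by (auto simp: addJ_def)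
    show "C \<subseteq> addJ n ` F"
    proof
      fix c assume c: "c \<in> C"
      define J where "J = {i\<in>{1..p}. c i = Suc (n i)}"
      have "c = addJ n J"
      proof
        fix k
        show "c k = addJ n J k"
        proof (cases "k \<in> {1..p}")
          case True
          have "n k \<le> c k" "c k \<le> Suc (n k)" using c unfolding C_def le_fun_def by auto
          then have "c k = n k \<or> c k = Suc (n k)" by linarith
          then show ?thesis using True unfolding J_def addJ_def by auto
        next
          case False
          then show ?thesis using c B n unfolding C_def J_def addJ_def vecs_def by auto
        qed
      qed
      then show "c \<in> addJ n ` F" using c unfolding F_def J_def C_def by auto
    qed
  qed
  also have "(\<Sum>c\<in>addJ n ` F. (-1::int) ^ (size1 p c - size1 p n)) = (\<Sum>J\<in>F. (-1::int) ^ (size1 p (addJ n J) - size1 p n))"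
  proof (rule sum.reindex[unfolded comp_def])
    show "inj_on (addJ n) F"
    proof
      fix J1 J2 assume e: "addJ n J1 = addJ n J2"
      have "k \<in> J1 \<longleftrightarrow> k \<in> J2" for k
        using fun_cong[OF e, of k] by (auto simp: addJ_def split: if_splits)
      then show "J1 = J2" by blast
    qed
  qed
  also have "\<dots> = (\<Sum>J\<in>F. (-1::int) ^ card J)"
    by (rule sum.cong) (auto simp: F_def size1_addJ)
  finally show ?thesis unfolding F_def .
qed

lemma finite_box: "finite {n\<in>vecs p. n \<le> u}"
proof -
  have "{n\<in>vecs p. n \<le> u} \<subseteq> {f. \<forall>x. (x \<in> {1..p} \<longrightarrow> f x \<in> {0..Max (u ` {1..p})}) \<and> (x \<notin> {1..p} \<longrightarrow> f x = 0)}"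
  proof (safe)
    fix f x assume "f \<in> vecs p" "f \<le> u" "x \<in> {1..p}"
    then have "f x \<le> u x" "u x \<le> Max (u ` {1..p})" by (auto simp: le_fun_def)
    then show "f x \<in> {0..Max (u ` {1..p})}" by simp
  next
    fix f x assume "f \<in> vecs p" "x \<notin> {1..p}"
    then show "f x = 0" unfolding vecs_def by auto
  qed
  moreover have "finite {f. \<forall>x. (x \<in> {1..p} \<longrightarrow> f x \<in> {0..Max (u ` {1..p})}) \<and> (x \<notin> {1..p} \<longrightarrow> f x = (0::nat))}"
    by (rule finite_set_of_finite_funs) auto
  ultimately show ?thesis by (rule finite_subset)
qed

lemma finite_Ideal: "finite P \<Longrightarrow> finite (Ideal p P)"
proof -
  assume "finite P"
  moreover have "Ideal p P = (\<Union>u\<in>P. {n\<in>vecs p. n \<le> u})" unfolding Ideal_def by auto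
  ultimately show ?thesis using finite_box by simp
qed

lemma Ideal_down: "b \<in> Ideal p P \<Longrightarrow> c \<in> vecs p \<Longrightarrow> c \<le> b \<Longrightarrow> c \<in> Ideal p P"
  unfolding Ideal_def using order_trans by blast

lemma Ideal_vecs: "Ideal p P \<subseteq> vecs p" unfolding Ideal_def by auto


section \<open>Lexicographic order\<close>

lemma lex_irrefl: "\<not> lex_less p \<sigma> u u"
  unfolding lex_less_def by simp

lemma lex_trans:
  assumes uv: "lex_less p \<sigma> u v" and vw: "lex_less p \<sigma> v w"
  shows "lex_less p \<sigma> u w"
proof -
  obtain k1 where k1: "k1 \<in> {1..p}" "\<forall>i\<in>{1..<k1}. u (\<sigma> i) = v (\<sigma> i)" "u (\<sigma> k1) < v (\<sigma> k1)"
    using uv unfolding lex_less_def by blast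
  obtain k2 where k2: "k2 \<in> {1..p}" "\<forall>i\<in>{1..<k2}. v (\<sigma> i) = w (\<sigma> i)" "v (\<sigma> k2) < w (\<sigma> k2)"
    using vw unfolding lex_less_def by blast
  define k where "k = min k1 k2"
  have kp: "k \<in> {1..p}" using k1 k2 unfolding k_def by auto
  have agree: "\<forall>i\<in>{1..<k}. u (\<sigma> i) = w (\<sigma> i)" using k1 k2 unfolding k_def by auto
  have lt: "u (\<sigma> k) < w (\<sigma> k)"
  proof (cases k1 k2 rule: linorder_cases)
    case less
    then have "k = k1" "v (\<sigma> k1) = w (\<sigma> k1)" using k1 k2 unfolding k_def by auto
    then show ?thesis using k1 by simp
  next
    case equal
    then show ?thesis using k1 k2 unfolding k_def by simp
  next
    case greater
    then have "k = k2" "u (\<sigma> k2) = v (\<sigma> k2)" using k1 k2 unfolding k_def by auto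
    then show ?thesis using k2 by simp
  qed
  have "u \<noteq> w" using lt by auto
  then show ?thesis unfolding lex_less_def using kp agree lt by blast
qed

lemma lex_total:
  assumes bij: "bij_betw \<sigma> {1..p} {1..p}" and u: "u \<in> vecs p" and v: "v \<in> vecs p" and ne: "u \<noteq> v"
  shows "lex_less p \<sigma> u v \<or> lex_less p \<sigma> v u"
proof -
  obtain i where i: "u i \<noteq> v i" using ne by blast
  have ip: "i \<in> {1..p}"
  proof (rule ccontr)
    assume "i \<notin> {1..p}"
    then have "u i = 0" "v i = 0" using u v unfolding vecs_def by auto
    then show False using i by simp
  qed
  have "i \<in> \<sigma> ` {1..p}" using ip bij unfolding bij_betw_def by simp
  then obtain k0 where k0: "k0 \<in> {1..p}" "\<sigma> k0 = i" by auto
  define Q where "Q = (\<lambda>k. k \<in> {1..p} \<and> u (\<sigma> k) \<noteq> v (\<sigma> k))"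
  have Qk0: "Q k0" using k0 i unfolding Q_def by simp
  define k where "k = (LEAST k. Q k)"
  have Qk: "Q k" unfolding k_def by (rule LeastI[where P=Q, OF Qk0])
  have agree: "\<forall>j\<in>{1..<k}. u (\<sigma> j) = v (\<sigma> j)"
  proof
    fix j assume j: "j \<in> {1..<k}"
    then have "\<not> Q j" unfolding k_def using not_less_Least by auto
    moreover have "j \<in> {1..p}" using j Qk unfolding Q_def by auto
    ultimately show "u (\<sigma> j) = v (\<sigma> j)" unfolding Q_def by simp
  qed
  have kp: "k \<in> {1..p}" using Qk unfolding Q_def by simp
  show ?thesis
  proof (cases "u (\<sigma> k) < v (\<sigma> k)")
    case True
    then show ?thesis unfolding lex_less_def using ne kp agree by blast
  next
    case False
    then have "v (\<sigma> k) < u (\<sigma> k)" using Qk unfolding Q_def by simp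
    moreover have "\<forall>j\<in>{1..<k}. v (\<sigma> j) = u (\<sigma> j)" using agree by simp
    ultimately show ?thesis unfolding lex_less_def using ne kp by blast
  qed
qed

lemma lex_min:
  assumes "finite A" "A \<noteq> {}"
  shows "\<exists>a\<in>A. \<forall>b\<in>A. \<not> lex_less p \<sigma> b a"
  using assms
proof (induction A rule: finite_ne_induct)
  case (singleton x)
  then show ?case using lex_irrefl by auto
next
  case (insert x F)
  then obtain a0 where a0: "a0 \<in> F" "\<forall>b\<in>F. \<not> lex_less p \<sigma> b a0" by blast
  show ?case
  proof (cases "lex_less p \<sigma> x a0")
    case True
    have "\<forall>b\<in>insert x F. \<not> lex_less p \<sigma> b x"
      using a0 True lex_trans lex_irrefl by blast
    then show ?thesis by blast
  next
    case False
    then show ?thesis using a0 by blast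
  qed
qed

section \<open>Exchange\<close>

lemma exch_lex:
  assumes pm: "polymatroid p P" and bij: "bij_betw \<sigma> {1..p} {1..p}"
    and a: "a \<in> P" and b: "b \<in> P" and ba: "lex_less p \<sigma> b a"
  shows "\<exists>s\<in>{1..p}. b s < a s \<and> s \<in> Lset p a {b\<in>P. lex_less p \<sigma> b a}"
proof -
  obtain k where k: "k \<in> {1..p}" "\<forall>i\<in>{1..<k}. b (\<sigma> i) = a (\<sigma> i)" "b (\<sigma> k) < a (\<sigma> k)"
    using ba unfolding lex_less_def by blast
  define s where "s = \<sigma> k"
  have sp: "s \<in> {1..p}" using k bij unfolding s_def bij_betw_def by auto
  have bs: "b s < a s" using k unfolding s_def by simp
  obtain j where j: "j \<in> {1..p}" "a j < b j" "exch a s j \<in> P"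
    using pm a b sp bs unfolding polymatroid_def by blast
  have "j \<in> \<sigma> ` {1..p}" using j bij unfolding bij_betw_def by simp
  then obtain k' where k': "k' \<in> {1..p}" "\<sigma> k' = j" by auto
  have inj: "inj_on \<sigma> {1..p}" using bij unfolding bij_betw_def by simp
  have "k' \<noteq> k" using k' j bs unfolding s_def by auto
  moreover have "\<not> k' < k"
  proof
    assume "k' < k"
    then have "b (\<sigma> k') = a (\<sigma> k')" using k k' by auto
    then show False using k' j by simp
  qed
  ultimately have kk': "k < k'" by simp
  have js: "j \<noteq> s" using j bs by auto
  define v where "v = exch a s j"
  have as1: "a s \<ge> 1" using bs by simp
  have vs: "v s < a s" using js as1 unfolding v_def exch_def by simp
  have vagree: "\<forall>i\<in>{1..<k}. v (\<sigma> i) = a (\<sigma> i)"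
  proof
    fix i assume i: "i \<in> {1..<k}"
    then have ip: "i \<in> {1..p}" using k by auto
    have ik: "i \<noteq> k" "i \<noteq> k'" using i kk' by auto
    have "\<sigma> i \<noteq> s" using inj_on_eq_iff[OF inj ip k(1)] ik unfolding s_def by simp
    moreover have "\<sigma> i \<noteq> j" using inj_on_eq_iff[OF inj ip k'(1)] ik k'(2) by simp
    ultimately show "v (\<sigma> i) = a (\<sigma> i)" unfolding v_def exch_def by simp
  qed
  have vne: "v \<noteq> a" using vs by auto
  have lexv: "lex_less p \<sigma> v a"
    unfolding lex_less_def using vne k(1) vagree vs unfolding s_def by blast
  have "\<forall>kk. int (v kk) = int (a kk) - (if kk = s then 1 else 0) + (if kk = j then 1 else 0)"
    using as1 unfolding v_def exch_def by auto
  then have "s \<in> Lset p a {b\<in>P. lex_less p \<sigma> b a}"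
    unfolding Lset_def using sp j lexv unfolding v_def by blast
  then show ?thesis using sp bs by blast
qed


section \<open>The sets E\<close>

definition Eset :: "nat \<Rightarrow> (nat \<Rightarrow> nat) \<Rightarrow> (nat \<Rightarrow> nat) set \<Rightarrow> (nat \<Rightarrow> nat) \<Rightarrow> (nat \<Rightarrow> nat) set" where
  "Eset p \<sigma> P a = {m\<in>vecs p. m \<le> a \<and> \<not> (\<exists>b\<in>P. lex_less p \<sigma> b a \<and> m \<le> b)}"

lemma E_key:
  assumes pm: "polymatroid p P" and bij: "bij_betw \<sigma> {1..p} {1..p}" and a: "a \<in> P"
  shows "Eset p \<sigma> P a = {m\<in>vecs p. m \<le> a \<and> (\<forall>l\<in>Lset p a {b\<in>P. lex_less p \<sigma> b a}. m l = a l)}"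
proof -
  define L where "L = Lset p a {b\<in>P. lex_less p \<sigma> b a}"
  have eqv: "(\<exists>b\<in>P. lex_less p \<sigma> b a \<and> m \<le> b) \<longleftrightarrow> (\<exists>l\<in>L. m l < a l)"
    if m: "m \<in> vecs p" "m \<le> a" for m
  proof
    assume "\<exists>b\<in>P. lex_less p \<sigma> b a \<and> m \<le> b"
    then obtain b where b: "b \<in> P" "lex_less p \<sigma> b a" "m \<le> b" by blast
    obtain s where s: "b s < a s" "s \<in> L" using exch_lex[OF pm bij a b(1) b(2)] unfolding L_def by blast
    have "m s \<le> b s" using b(3) by (simp add: le_fun_def)
    then show "\<exists>l\<in>L. m l < a l" using s by force
  next
    assume "\<exists>l\<in>L. m l < a l"
    then obtain l where l: "l \<in> L" "m l < a l" by blast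
    then obtain j v where v: "v \<in> P" "lex_less p \<sigma> v a"
      "\<forall>k. int (v k) = int (a k) - (if k = l then 1 else 0) + (if k = j then 1 else 0)"
      unfolding L_def Lset_def by blast
    have "int (m k) \<le> int (v k)" for k
    proof -
      have e: "int (v k) = int (a k) - (if k = l then 1 else 0) + (if k = j then 1 else 0)" using v by blast
      have "m k \<le> a k" using m by (simp add: le_fun_def)
      then show ?thesis using e l by (auto split: if_splits)
    qed
    then have "m \<le> v" by (simp add: le_fun_def)
    then show "\<exists>b\<in>P. lex_less p \<sigma> b a \<and> m \<le> b" using v by blast
  qed
  show ?thesis
  proof (intro set_eqI iffI)
    fix m assume "m \<in> Eset p \<sigma> P a"
    then have m: "m \<in> vecs p" "m \<le> a" "\<not> (\<exists>b\<in>P. lex_less p \<sigma> b a \<and> m \<le> b)"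
      unfolding Eset_def by auto
    have "\<forall>l\<in>L. m l = a l"
    proof
      fix l assume "l \<in> L"
      moreover have "m l \<le> a l" using m(2) by (simp add: le_fun_def)
      ultimately show "m l = a l" using eqv[OF m(1,2)] m(3) by (meson le_neq_implies_less)
    qed
    then show "m \<in> {m\<in>vecs p. m \<le> a \<and> (\<forall>l\<in>Lset p a {b\<in>P. lex_less p \<sigma> b a}. m l = a l)}"
      using m unfolding L_def by blast
  next
    fix m assume "m \<in> {m\<in>vecs p. m \<le> a \<and> (\<forall>l\<in>Lset p a {b\<in>P. lex_less p \<sigma> b a}. m l = a l)}"
    then have m: "m \<in> vecs p" "m \<le> a" "\<forall>l\<in>L. m l = a l" unfolding L_def by auto
    then have "\<not> (\<exists>l\<in>L. m l < a l)" by auto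
    then show "m \<in> Eset p \<sigma> P a" using eqv[OF m(1,2)] m unfolding Eset_def by blast
  qed
qed


lemma per_a:
  assumes pm: "polymatroid p P" and bij: "bij_betw \<sigma> {1..p} {1..p}" and a: "a \<in> P"
    and n: "n \<in> vecs p"
  shows "(\<Sum>c\<in>{c\<in>Eset p \<sigma> P a. n \<le> c}. hh p n c)
       = (if n \<in> St p a {b\<in>P. lex_less p \<sigma> b a} then (-1::int) ^ (size1 p a - size1 p n) else 0)"
proof -
  define L where "L = Lset p a {b\<in>P. lex_less p \<sigma> b a}"
  define E' where "E' = {m\<in>vecs p. m \<le> a \<and> (\<forall>l\<in>L. m l = a l)}"
  have Eeq: "Eset p \<sigma> P a = E'" unfolding E'_def L_def by (rule E_key[OF pm bij a])
  have avec: "a \<in> vecs p" using pm a unfolding polymatroid_def by blast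
  have E'v: "E' \<subseteq> vecs p" unfolding E'_def by auto
  have finE': "finite E'" by (rule finite_subset[OF _ finite_box[of p a]]) (auto simp: E'_def)
  define F where "F = {J. J \<subseteq> {1..p} \<and> addJ n J \<in> E'}"
  have lhs: "(\<Sum>c\<in>{c\<in>Eset p \<sigma> P a. n \<le> c}. hh p n c) = (\<Sum>J\<in>F. (-1::int) ^ card J)"
    unfolding Eeq F_def by (rule conv[OF n E'v finE'])
  have finF: "finite F" by (rule finite_subset[of F "Pow {1..p}"]) (auto simp: F_def)
  have Lsub: "L \<subseteq> {1..p}" unfolding L_def Lset_def by auto
  have Stc: "n \<in> St p a {b\<in>P. lex_less p \<sigma> b a} \<longleftrightarrow> (\<exists>J. J \<subseteq> L \<and> n = (\<lambda>k. a k - (if k \<in> J then 1 else 0)))"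
    unfolding St_def L_def by blast
  have Fm: "J \<subseteq> {1..p}" "addJ n J \<le> a" "\<forall>l\<in>L. addJ n J l = a l" if "J \<in> F" for J
    using that unfolding F_def E'_def by auto
  show ?thesis
  proof (cases "n \<le> a")
    case False
    have "F = {}"
    proof (rule ccontr)
      assume "F \<noteq> {}"
      then obtain J where "J \<in> F" by blast
      then have "n \<le> a" using Fm(2) le_addJ order_trans by blast
      then show False using False by simp
    qed
    moreover have "n \<notin> St p a {b\<in>P. lex_less p \<sigma> b a}"
    proof
      assume "n \<in> St p a {b\<in>P. lex_less p \<sigma> b a}"
      then obtain J where "n = (\<lambda>k. a k - (if k \<in> J then 1 else 0))" using Stc by blast
      then have "n \<le> a" by (simp add: le_fun_def)
      then show False using False by simp
    qed
    ultimately show ?thesis using lhs by simp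
  next
    case True
    define K where "K = {i\<in>{1..p}. n i < a i}"
    have nle: "n k \<le> a k" for k using True by (simp add: le_fun_def)
    show ?thesis
    proof (cases "\<exists>i\<in>K. i \<notin> L")
      case True
      then obtain i where i: "i \<in> K" "i \<notin> L" by blast
      have ip: "i \<in> {1..p}" and ni: "n i < a i" using i unfolding K_def by auto
      have "(\<Sum>J\<in>F. (-1::int) ^ card J) = 0"
      proof (rule toggle_sum[OF finF])
        fix J assume J: "J \<in> F"
        show "finite J" using Fm(1)[OF J] finite_subset by blast
        show "insert i J \<in> F"
        proof -
          have s: "insert i J \<subseteq> {1..p}" using Fm(1)[OF J] ip by auto
          have "addJ n (insert i J) k \<le> a k" for k
          proof (cases "k = i")
            case True then show ?thesis using ni by (simp add: addJ_def)
          next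
            case False
            then have "addJ n (insert i J) k = addJ n J k" by (simp add: addJ_def)
            then show ?thesis using Fm(2)[OF J] by (simp add: le_fun_def)
          qed
          moreover have "\<forall>l\<in>L. addJ n (insert i J) l = a l"
          proof
            fix l assume l: "l \<in> L"
            then have "l \<noteq> i" using i by auto
            then have "addJ n (insert i J) l = addJ n J l" by (simp add: addJ_def)
            then show "addJ n (insert i J) l = a l" using Fm(3)[OF J] l by simp
          qed
          ultimately show ?thesis using s addJ_vecs[OF n s] unfolding F_def E'_def by (simp add: le_fun_def)
        qed
        show "J - {i} \<in> F"
        proof -
          have s: "J - {i} \<subseteq> {1..p}" using Fm(1)[OF J] by auto
          have "addJ n (J - {i}) k \<le> a k" for k
          proof -
            have "addJ n (J - {i}) k \<le> addJ n J k" by (simp add: addJ_def)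
            moreover have "addJ n J k \<le> a k" using Fm(2)[OF J] by (simp add: le_fun_def)
            ultimately show ?thesis by (rule order_trans)
          qed
          moreover have "\<forall>l\<in>L. addJ n (J - {i}) l = a l"
          proof
            fix l assume l: "l \<in> L"
            then have "l \<noteq> i" using i by auto
            then have "addJ n (J - {i}) l = addJ n J l" by (simp add: addJ_def)
            then show "addJ n (J - {i}) l = a l" using Fm(3)[OF J] l by simp
          qed
          ultimately show ?thesis using s addJ_vecs[OF n s] unfolding F_def E'_def by (simp add: le_fun_def)
        qed
      qed
      moreover have "n \<notin> St p a {b\<in>P. lex_less p \<sigma> b a}"
      proof
        assume "n \<in> St p a {b\<in>P. lex_less p \<sigma> b a}"
        then obtain J where J: "J \<subseteq> L" "n = (\<lambda>k. a k - (if k \<in> J then 1 else 0))" using Stc by blast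
        then have "i \<in> J" using ni by (cases "i \<in> J") auto
        then show False using J i by auto
      qed
      ultimately show ?thesis using lhs by simp
    next
      case False
      then have KL: "K \<subseteq> L" by auto
      have Kp: "K \<subseteq> {1..p}" unfolding K_def by auto
      define C where "C = (\<forall>i\<in>K. a i = Suc (n i))"
      have FK: "J = K \<and> C" if J: "J \<in> F" for J
      proof -
        have "i \<in> K" if "i \<in> J" for i
        proof -
          have "addJ n J i \<le> a i" using Fm(2)[OF J] by (simp add: le_fun_def)
          then show ?thesis using that Fm(1)[OF J] unfolding K_def addJ_def by auto
        qed
        moreover have "i \<in> J \<and> a i = Suc (n i)" if "i \<in> K" for i
        proof -
          have "addJ n J i = a i" using Fm(3)[OF J] that KL by auto
          moreover have "n i < a i" using that unfolding K_def by auto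
          ultimately show ?thesis unfolding addJ_def by (auto split: if_splits)
        qed
        ultimately show ?thesis unfolding C_def by blast
      qed
      have CK: "a = addJ n K" if C
      proof
        fix k
        show "a k = addJ n K k"
        proof (cases "k \<in> K")
          case True then show ?thesis using \<open>C\<close> unfolding C_def addJ_def by simp
        next
          case False
          then have "a k = n k"
          proof (cases "k \<in> {1..p}")
            case True
            then show ?thesis using False nle[of k] unfolding K_def by auto
          next
            case False
            then show ?thesis using n avec unfolding vecs_def by auto
          qed
          then show ?thesis using False unfolding addJ_def by simp
        qed
      qed
      have StC: "n \<in> St p a {b\<in>P. lex_less p \<sigma> b a} \<longleftrightarrow> C"
      proof
        assume "n \<in> St p a {b\<in>P. lex_less p \<sigma> b a}"
        then obtain J where J: "J \<subseteq> L" "n = (\<lambda>k. a k - (if k \<in> J then 1 else 0))" using Stc by blast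
        show C unfolding C_def
        proof
          fix i assume "i \<in> K"
          then have ni: "n i < a i" unfolding K_def by auto
          then have "i \<in> J" using J by (cases "i \<in> J") auto
          then show "a i = Suc (n i)" using J ni by simp
        qed
      next
        assume C
        have "n = (\<lambda>k. a k - (if k \<in> K then 1 else 0))"
          using CK[OF \<open>C\<close>] by (simp add: addJ_def)
        then show "n \<in> St p a {b\<in>P. lex_less p \<sigma> b a}" using Stc KL by blast
      qed
      show ?thesis
      proof (cases C)
        case True
        have "K \<in> F" unfolding F_def E'_def using Kp CK[OF True] avec by auto
        then have "F = {K}" using FK by blast
        moreover have "size1 p a = size1 p n + card K" using CK[OF True] size1_addJ[OF Kp] by simp
        ultimately show ?thesis using lhs StC True by simp
      next
        case False
        then have "F = {}" using FK by blast
        then show ?thesis using lhs StC False by simp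
      qed
    qed
  qed
qed


section \<open>The Moebius function\<close>

fun gg :: "nat \<Rightarrow> (nat \<Rightarrow> nat) set \<Rightarrow> (nat \<Rightarrow> nat) option \<Rightarrow> (nat \<Rightarrow> nat) option \<Rightarrow> int" where
  "gg p P (Some m) (Some b) = (if m \<in> Ideal p P \<and> b \<in> Ideal p P then hh p m b else 0)"
| "gg p P (Some m) None = (if m \<in> Ideal p P then - (\<Sum>c\<in>{c\<in>Ideal p P. m \<le> c}. hh p m c) else 0)"
| "gg p P None None = 1"
| "gg p P None (Some b) = 0"

lemma Ple_refl: "Ple x x" by (cases x) auto
lemma Ple_antisym: "Ple x y \<Longrightarrow> Ple y x \<Longrightarrow> x = y" by (cases x; cases y) auto
lemma Ple_trans: "Ple x y \<Longrightarrow> Ple y z \<Longrightarrow> Ple x z" by (cases x; cases y; cases z) auto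

lemma alt_zero:
  assumes finP: "finite P" and m: "m \<in> Ideal p P" and b: "b \<in> Ideal p P" and mb: "m \<le> b" "m \<noteq> b"
  shows "(\<Sum>c\<in>{c\<in>{c\<in>Ideal p P. c \<le> b}. m \<le> c}. hh p m c) = 0"
proof -
  define B where "B = {c\<in>Ideal p P. c \<le> b}"
  have mv: "m \<in> vecs p" and bv: "b \<in> vecs p" using m b Ideal_vecs by auto
  have Bv: "B \<subseteq> vecs p" using Ideal_vecs unfolding B_def by auto
  have finB: "finite B" using finite_Ideal[OF finP] unfolding B_def by auto
  obtain i where i: "m i \<noteq> b i" using mb by blast
  have ip: "i \<in> {1..p}"
  proof (rule ccontr)
    assume "i \<notin> {1..p}"
    then have "m i = 0" "b i = 0" using mv bv unfolding vecs_def by auto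
    then show False using i by simp
  qed
  have mi: "m i < b i" using i mb(1) by (simp add: le_fun_def le_neq_implies_less)
  define F where "F = {J. J \<subseteq> {1..p} \<and> addJ m J \<in> B}"
  have FB: "J \<in> F \<longleftrightarrow> J \<subseteq> {1..p} \<and> addJ m J \<le> b" for J
  proof
    assume "J \<in> F" then show "J \<subseteq> {1..p} \<and> addJ m J \<le> b" unfolding F_def B_def by auto
  next
    assume J: "J \<subseteq> {1..p} \<and> addJ m J \<le> b"
    then have "addJ m J \<in> Ideal p P" using Ideal_down[OF b addJ_vecs[OF mv]] by blast
    then show "J \<in> F" using J unfolding F_def B_def by auto
  qed
  have "(\<Sum>c\<in>{c\<in>B. m \<le> c}. hh p m c) = (\<Sum>J\<in>F. (-1::int) ^ card J)"
    unfolding F_def by (rule conv[OF mv Bv finB])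
  also have "\<dots> = 0"
  proof (rule toggle_sum)
    show "finite F" by (rule finite_subset[of F "Pow {1..p}"]) (auto simp: F_def)
    fix J assume J: "J \<in> F"
    then have Js: "J \<subseteq> {1..p}" and Jb: "addJ m J \<le> b" using FB by auto
    show "finite J" using Js finite_subset by blast
    have "addJ m (insert i J) k \<le> b k" for k
    proof (cases "k = i")
      case True then show ?thesis using mi by (simp add: addJ_def)
    next
      case False
      then have "addJ m (insert i J) k = addJ m J k" by (simp add: addJ_def)
      then show ?thesis using Jb by (simp add: le_fun_def)
    qed
    then show "insert i J \<in> F" using FB Js ip by (simp add: le_fun_def)
    have "addJ m (J - {i}) k \<le> b k" for k
    proof -
      have "addJ m (J - {i}) k \<le> addJ m J k" by (simp add: addJ_def)
      moreover have "addJ m J k \<le> b k" using Jb by (simp add: le_fun_def)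
      ultimately show ?thesis by (rule order_trans)
    qed
    then show "J - {i} \<in> F" using FB Js by (auto simp: le_fun_def)
  qed
  finally show ?thesis unfolding B_def .
qed

lemma gg_spec:
  assumes finP: "finite P"
  shows "mob_spec (Pset p P) Ple (gg p P)"
  unfolding mob_spec_def
proof (intro conjI allI impI ballI)
  fix x y assume "x \<notin> Pset p P \<or> y \<notin> Pset p P"
  then show "gg p P x y = 0" by (cases x; cases y) (auto simp: Pset_def)
next
  fix x y assume x: "x \<in> Pset p P" and y: "y \<in> Pset p P"
  define I where "I = Ideal p P"
  show "gg p P x y = (if x = y then 1
         else if Ple x y then - (\<Sum>a\<in>{a \<in> Pset p P. Ple x a \<and> Ple a y \<and> a \<noteq> y}. gg p P x a)
         else 0)"
  proof (cases x)
    case None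
    then show ?thesis by (cases y) auto
  next
    case (Some m)
    note xm = Some
    then have mI: "m \<in> I" using x unfolding Pset_def I_def by auto
    show ?thesis
    proof (cases y)
      case None
      have set: "{a \<in> Pset p P. Ple (Some m) a \<and> Ple a None \<and> a \<noteq> None} = Some ` {c\<in>I. m \<le> c}"
        unfolding Pset_def I_def by (auto elim: Ple.elims)
      have "(\<Sum>a\<in>{a \<in> Pset p P. Ple (Some m) a \<and> Ple a None \<and> a \<noteq> None}. gg p P (Some m) a)
          = (\<Sum>c\<in>{c\<in>I. m \<le> c}. gg p P (Some m) (Some c))"
        unfolding set by (rule sum.reindex[unfolded comp_def]) simp
      also have "\<dots> = (\<Sum>c\<in>{c\<in>I. m \<le> c}. hh p m c)"
        by (rule sum.cong) (use mI in \<open>auto simp: I_def\<close>)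
      finally show ?thesis using xm None mI unfolding I_def by simp
    next
      case (Some b)
      note yb = Some
      then have bI: "b \<in> I" using y unfolding Pset_def I_def by auto
      show ?thesis
      proof (cases "m = b")
        case True
        then show ?thesis using xm yb mI unfolding I_def by (simp add: hh_def)
      next
        case False
        show ?thesis
        proof (cases "m \<le> b")
          case False2: False
          then show ?thesis using xm yb False by (simp add: hh_def)
        next
          case True
          define D where "D = {c\<in>I. m \<le> c \<and> c \<le> b \<and> c \<noteq> b}"
          have set: "{a \<in> Pset p P. Ple (Some m) a \<and> Ple a (Some b) \<and> a \<noteq> Some b} = Some ` D"
            unfolding Pset_def D_def I_def by (auto elim: Ple.elims)
          have "(\<Sum>a\<in>{a \<in> Pset p P. Ple (Some m) a \<and> Ple a (Some b) \<and> a \<noteq> Some b}. gg p P (Some m) a)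
              = (\<Sum>c\<in>D. gg p P (Some m) (Some c))"
            unfolding set by (rule sum.reindex[unfolded comp_def]) simp
          also have "\<dots> = (\<Sum>c\<in>D. hh p m c)"
            by (rule sum.cong) (use mI in \<open>auto simp: I_def D_def\<close>)
          finally have s1: "(\<Sum>a\<in>{a \<in> Pset p P. Ple (Some m) a \<and> Ple a (Some b) \<and> a \<noteq> Some b}. gg p P (Some m) a)
              = (\<Sum>c\<in>D. hh p m c)" .
          have ins: "{c\<in>{c\<in>I. c \<le> b}. m \<le> c} = insert b D" using bI True unfolding D_def by auto
          have finD: "finite D" using finite_Ideal[OF finP] unfolding D_def I_def by auto
          have "hh p m b + (\<Sum>c\<in>D. hh p m c) = 0"
            using alt_zero[OF finP mI[unfolded I_def] bI[unfolded I_def] True False] ins finD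
            unfolding I_def by (simp add: D_def)
          then show ?thesis using s1 xm yb False True mI bI unfolding I_def by simp
        qed
      qed
    qed
  qed
qed

lemma mobius_gg:
  assumes finP: "finite P"
  shows "mobius (Pset p P) Ple = gg p P"
proof (rule mobius_eq)
  show "finite (Pset p P)" using finite_Ideal[OF finP] unfolding Pset_def by simp
qed (use Ple_antisym Ple_trans Ple_refl gg_spec[OF finP] in auto)


lemma rk_eq:
  assumes pm: "polymatroid p P" and a: "a \<in> P"
  shows "rk p P = size1 p a"
proof -
  have "(SOME u. u \<in> P) \<in> P" using a by (rule someI[where P="\<lambda>u. u \<in> P"])
  then show ?thesis using pm a unfolding rk_def polymatroid_def by blast
qed

lemma ideal_union:
  assumes pm: "polymatroid p P"
  shows "{c\<in>Ideal p P. n \<le> c} = (\<Union>a\<in>P. {c\<in>Eset p \<sigma> P a. n \<le> c})"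
proof
  have finP: "finite P" using pm unfolding polymatroid_def by blast
  show "{c\<in>Ideal p P. n \<le> c} \<subseteq> (\<Union>a\<in>P. {c\<in>Eset p \<sigma> P a. n \<le> c})"
  proof
    fix c assume c: "c \<in> {c\<in>Ideal p P. n \<le> c}"
    define A where "A = {a\<in>P. c \<le> a}"
    have "finite A" "A \<noteq> {}" using c finP unfolding A_def Ideal_def by auto
    then obtain a where a: "a \<in> A" "\<forall>b\<in>A. \<not> lex_less p \<sigma> b a" using lex_min by blast
    have "c \<in> Eset p \<sigma> P a" using a c unfolding Eset_def A_def Ideal_def by auto
    then show "c \<in> (\<Union>a\<in>P. {c\<in>Eset p \<sigma> P a. n \<le> c})" using a c unfolding A_def by auto
  qed
  show "(\<Union>a\<in>P. {c\<in>Eset p \<sigma> P a. n \<le> c}) \<subseteq> {c\<in>Ideal p P. n \<le> c}"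
    unfolding Eset_def Ideal_def by auto
qed

theorem mainTheorem8:
  fixes p :: nat and P :: "(nat \<Rightarrow> nat) set" and \<sigma> :: "nat \<Rightarrow> nat"
  assumes "polymatroid p P"
    and "bij_betw \<sigma> {1..p} {1..p}"
  shows "Stal p \<sigma> P = Mob p P"
proof
  fix n
  note pm = assms(1) and bij = assms(2)
  have finP: "finite P" using pm unfolding polymatroid_def by blast
  have Pv: "P \<subseteq> vecs p" using pm unfolding polymatroid_def by blast
  show "Stal p \<sigma> P n = Mob p P n"
  proof (cases "n \<in> Ideal p P")
    case False
    then show ?thesis unfolding Stal_def Mob_def by simp
  next
    case True
    have nv: "n \<in> vecs p" using True Ideal_vecs by auto
    define Q where "Q = (\<lambda>a. n \<in> St p a {b\<in>P. lex_less p \<sigma> b a})"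
    have "Mob p P n = (\<Sum>c\<in>{c\<in>Ideal p P. n \<le> c}. hh p n c)"
      using True unfolding Mob_def mu_P_def mobius_gg[OF finP] by simp
    also have "\<dots> = (\<Sum>a\<in>P. \<Sum>c\<in>{c\<in>Eset p \<sigma> P a. n \<le> c}. hh p n c)"
      unfolding ideal_union[OF pm, of n \<sigma>]
    proof (rule sum.UNION_disjoint[OF finP])
      show "\<forall>a\<in>P. finite {c\<in>Eset p \<sigma> P a. n \<le> c}"
      proof
        fix a assume "a \<in> P"
        have "{c\<in>Eset p \<sigma> P a. n \<le> c} \<subseteq> Ideal p P" using \<open>a \<in> P\<close> unfolding Eset_def Ideal_def by auto
        then show "finite {c\<in>Eset p \<sigma> P a. n \<le> c}" using finite_Ideal[OF finP] finite_subset by blast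
      qed
      show "\<forall>a\<in>P. \<forall>a'\<in>P. a \<noteq> a' \<longrightarrow> {c\<in>Eset p \<sigma> P a. n \<le> c} \<inter> {c\<in>Eset p \<sigma> P a'. n \<le> c} = {}"
      proof (intro ballI impI)
        fix a a' assume a: "a \<in> P" and a': "a' \<in> P" and ne: "a \<noteq> a'"
        have "lex_less p \<sigma> a a' \<or> lex_less p \<sigma> a' a" using lex_total[OF bij _ _ ne] a a' Pv by auto
        then show "{c\<in>Eset p \<sigma> P a. n \<le> c} \<inter> {c\<in>Eset p \<sigma> P a'. n \<le> c} = {}"
          using a a' unfolding Eset_def by auto
      qed
    qed
    also have "\<dots> = (\<Sum>a\<in>P. if Q a then (-1::int) ^ (rk p P - size1 p n) else 0)"
    proof (rule sum.cong[OF refl])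
      fix a assume a: "a \<in> P"
      show "(\<Sum>c\<in>{c\<in>Eset p \<sigma> P a. n \<le> c}. hh p n c) = (if Q a then (-1::int) ^ (rk p P - size1 p n) else 0)"
        unfolding per_a[OF pm bij a nv] rk_eq[OF pm a] Q_def ..
    qed
    also have "\<dots> = (\<Sum>a\<in>{a\<in>P. Q a}. (-1::int) ^ (rk p P - size1 p n))"
      by (rule sum.inter_filter[OF finP, symmetric])
    also have "\<dots> = Stal p \<sigma> P n"
      using True unfolding Stal_def stal_c_def Q_def by simp
    finally show ?thesis by simp
  qed
qed

end
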